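(* Let $K$ be an (unknown) positive integer, let $0<\mu<1$, and let $\lambda\ge\max\left(\frac{2^{56}}{\mu^2},\ \sqrt[5]{\frac{48}{\mu}\ln K}\right)$. Let $(p,q,\omega)$ be a triple produced by the algorithm described below on input $\lambda$. Then the probability that $q$ divides $K$ is at most $\mu$.
   Context: The algorithm, given $\lambda$ and a failure parameter $\epsilon\in(0,1)$ with $\lambda\ge 2^{58}/\epsilon^2$, proceeds as follows (primality being tested by a deterministic polynomial-time primality test): (1) sample at most $\frac{5}{6}\ln\frac{4}{\epsilon}\ln\lambda$ independent uniformly random odd integers $p\in(\lambda,2\lambda)$ until one is prime; return \textsc{fail} if none is prime. (2) Sample at most $12\ln\frac{4}{\epsilon}\ln\lambda$ independent uniformly random even integers $a\in[1,\lambda^5]$ until $q=ap+1$ is prime; return \textsc{fail} if none gives a prime. (3) Sample at most $\log_p\frac{4}{\epsilon}$ independent uniformly random elements $\zeta\in\mathbb{F}_q^\times$ until $\omega=\zeta^{(q-1)/p}\ne 1$; return \textsc{fail} if $\omega=1$ for every sampled $\zeta$. (4) Return $(p,q,\omega)$. With probability at least $1-\epsilon$ this returns a triple in which $p$ is a uniformly random prime in $(\lambda,2\lambda)$, $q\le\lambda^6$ is a prime with $p\mid q-1$, and $\omega$ is a primitive $p$-th root of unity in $\mathbb{F}_q$. *)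

theory Defs
  imports "HOL-Probability.Probability" "HOL-Computational_Algebra.Primes"
begin

fun try_until :: "nat \<Rightarrow> 'a pmf \<Rightarrow> ('a \<Rightarrow> bool) \<Rightarrow> 'a option pmf" where
  "try_until 0 D P = return_pmf None"
| "try_until (Suc n) D P =
     bind_pmf D (\<lambda>x. if P x then return_pmf (Some x) else try_until n D P)"

text \<open>The parameter generation algorithm on inputs lam (lambda) and eps (epsilon).
Elements of F_q are represented by residues 0..q-1; None means fail.\<close>
definition gen_params :: "real \<Rightarrow> real \<Rightarrow> (nat \<times> nat \<times> nat) option pmf" where
  "gen_params lam eps =
     bind_pmf
       (try_until (nat \<lfloor>5/6 * ln (4/eps) * ln lam\<rfloor>)
          (pmf_of_set {p::nat. odd p \<and> lam < real p \<and> real p < 2 * lam}) prime)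
       (\<lambda>po. case po of
          None \<Rightarrow> return_pmf None
        | Some p \<Rightarrow>
            bind_pmf
              (try_until (nat \<lfloor>12 * ln (4/eps) * ln lam\<rfloor>)
                 (pmf_of_set {a::nat. even a \<and> 1 \<le> a \<and> real a \<le> lam ^ 5})
                 (\<lambda>a. prime (a * p + 1)))
              (\<lambda>ao. case ao of
                 None \<Rightarrow> return_pmf None
               | Some a \<Rightarrow>
                   bind_pmf
                     (try_until (nat \<lceil>log (real p) (4/eps)\<rceil>)
                        (pmf_of_set {1..<a * p + 1})
                        (\<lambda>z. z ^ ((a * p + 1 - 1) div p) mod (a * p + 1) \<noteq> 1))
                     (\<lambda>zo. case zo of
                        None \<Rightarrow> return_pmf None
                      | Some z \<Rightarrow> return_pmf (Some (p, a * p + 1,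
                           z ^ ((a * p + 1 - 1) div p) mod (a * p + 1))))))"

end

theory Submission
  imports Defs
begin


lemma try_until_set:
  "set_pmf (try_until n D P) \<subseteq> insert None (Some ` {x\<in>set_pmf D. P x})"
  by (induction n) (auto split: if_splits)

lemma try_until_emeasure:
  "emeasure (measure_pmf (try_until n D P)) (Some ` A) \<le> of_nat n * emeasure (measure_pmf D) A"
proof (induction n)
  case 0
  then show ?case by simp
next
  case (Suc n)
  let ?T = "measure_pmf (try_until n D P)"
  have "emeasure (measure_pmf (try_until (Suc n) D P)) (Some ` A)
     = (\<integral>\<^sup>+x. emeasure (if P x then return_pmf (Some x) else try_until n D P) (Some ` A) \<partial>measure_pmf D)"
    by simp
  also have "\<dots> \<le> (\<integral>\<^sup>+x. indicator A x + emeasure ?T (Some ` A) \<partial>measure_pmf D)"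
    by (intro nn_integral_mono) (auto simp: indicator_def)
  also have "\<dots> = emeasure (measure_pmf D) A + emeasure ?T (Some ` A)"
    by (subst nn_integral_add) (auto simp: measure_pmf.emeasure_space_1)
  also have "\<dots> \<le> emeasure (measure_pmf D) A + of_nat n * emeasure (measure_pmf D) A"
    using Suc by (intro add_left_mono)
  also have "\<dots> = of_nat (Suc n) * emeasure (measure_pmf D) A"
    by (simp add: algebra_simps)
  finally show ?case .
qed

lemma emeasure_bind_le_ind:
  assumes "\<And>x. x \<in> set_pmf M \<Longrightarrow> emeasure (measure_pmf (f x)) S \<le> indicator A x"
  shows "emeasure (measure_pmf (bind_pmf M f)) S \<le> emeasure (measure_pmf M) A"
proof -
  have "emeasure (measure_pmf (bind_pmf M f)) S = (\<integral>\<^sup>+x. emeasure (f x) S \<partial>measure_pmf M)"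
    by simp
  also have "\<dots> \<le> (\<integral>\<^sup>+x. indicator A x \<partial>measure_pmf M)"
    by (intro nn_integral_mono_AE AE_pmfI assms)
  also have "\<dots> = emeasure (measure_pmf M) A" by simp
  finally show ?thesis .
qed



definition Pset :: "real \<Rightarrow> nat set" where
  "Pset lam = {p::nat. odd p \<and> lam < real p \<and> real p < 2 * lam}"
definition Aset :: "real \<Rightarrow> nat set" where
  "Aset lam = {a::nat. even a \<and> 1 \<le> a \<and> real a \<le> lam ^ 5}"
definition Gset :: "real \<Rightarrow> nat \<Rightarrow> nat \<Rightarrow> nat set" where
  "Gset lam K p = {a \<in> Aset lam. prime p \<and> prime (a * p + 1) \<and> (a * p + 1) dvd K}"

lemma finite_Pset: "finite (Pset lam)"
proof -
  have "Pset lam \<subseteq> {..nat \<lceil>2*lam\<rceil>}" unfolding Pset_def by (auto simp: le_nat_iff) (metis ceiling_mono ceiling_of_nat less_imp_le)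
  then show ?thesis by (rule finite_subset) simp
qed

lemma finite_Aset: "finite (Aset lam)"
proof -
  have "Aset lam \<subseteq> {..nat \<lceil>lam^5\<rceil>}" unfolding Aset_def by (auto simp: le_nat_iff) (metis ceiling_mono ceiling_of_nat)
  then show ?thesis by (rule finite_subset) simp
qed



definition Eset :: "nat \<Rightarrow> (nat \<times> nat \<times> nat) option set" where
  "Eset K = {r. \<exists>p q w. r = Some (p, q, w) \<and> q dvd K}"

lemma step2:
  assumes "finite (Aset lam)" "Aset lam \<noteq> {}"
  shows "emeasure (measure_pmf (bind_pmf (try_until n2 (pmf_of_set (Aset lam)) (\<lambda>a. prime (a*p+1)))
     (\<lambda>ao. case ao of None \<Rightarrow> return_pmf None
        | Some a \<Rightarrow> bind_pmf (try_until (n3 a) (D3 a) (P3 a))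
            (\<lambda>zo. case zo of None \<Rightarrow> return_pmf None
               | Some z \<Rightarrow> return_pmf (Some (p, a*p+1, f a z)))))) (Eset K)
   \<le> emeasure (measure_pmf (try_until n2 (pmf_of_set (Aset lam)) (\<lambda>a. prime (a*p+1)))) (Some ` {a\<in>Aset lam. prime (a*p+1) \<and> (a*p+1) dvd K})"
proof (rule emeasure_bind_le_ind)
  fix ao assume ao: "ao \<in> set_pmf (try_until n2 (pmf_of_set (Aset lam)) (\<lambda>a. prime (a*p+1)))"
  show "emeasure (measure_pmf (case ao of None \<Rightarrow> return_pmf None
        | Some a \<Rightarrow> bind_pmf (try_until (n3 a) (D3 a) (P3 a))
            (\<lambda>zo. case zo of None \<Rightarrow> return_pmf None
               | Some z \<Rightarrow> return_pmf (Some (p, a*p+1, f a z))))) (Eset K)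
     \<le> indicator (Some ` {a\<in>Aset lam. prime (a*p+1) \<and> (a*p+1) dvd K}) ao"
  proof (cases ao)
    case None
    then show ?thesis by (simp add: Eset_def)
  next
    case (Some a)
    with ao try_until_set[of n2 "pmf_of_set (Aset lam)" "\<lambda>a. prime (a*p+1)"] assms
    have a: "a \<in> Aset lam" "prime (a*p+1)" by auto
    show ?thesis
    proof (cases "(a*p+1) dvd K")
      case True
      then have "indicator (Some ` {a\<in>Aset lam. prime (a*p+1) \<and> (a*p+1) dvd K}) ao = (1::ennreal)"
        using a Some by (auto simp: indicator_def)
      then show ?thesis using Some by (simp add: measure_pmf.emeasure_le_1 del: emeasure_bind_pmf)
    next
      case False
      have "\<And>zo. emeasure (measure_pmf (case zo of None \<Rightarrow> return_pmf None
               | Some z \<Rightarrow> return_pmf (Some (p, a*p+1, f a z)))) (Eset K) = 0"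
        using False by (auto split: option.split simp: Eset_def indicator_def)
      then show ?thesis using Some by (simp only: option.simps emeasure_bind_pmf nn_integral_const mult_zero_left zero_le)
    qed
  qed
qed



lemma step1:
  fixes F :: "nat option \<Rightarrow> 'b pmf"
  assumes fP: "finite P" and ne: "P \<noteq> {}"
    and none: "emeasure (measure_pmf (F None)) E = 0"
    and some: "\<And>p. p \<in> P \<Longrightarrow> prime p \<Longrightarrow> emeasure (measure_pmf (F (Some p))) E \<le> c p"
  shows "emeasure (measure_pmf (bind_pmf (try_until n (pmf_of_set P) prime) F)) E \<le>
    (\<Sum>p\<in>P. emeasure (measure_pmf (try_until n (pmf_of_set P) prime)) (Some ` {p}) * c p)"
proof -
  let ?T1 = "try_until n (pmf_of_set P) prime"
  have "emeasure (measure_pmf (bind_pmf ?T1 F)) E \<le>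
     (\<integral>\<^sup>+po. (\<Sum>p\<in>P. indicator (Some ` {p}) po * c p) \<partial>measure_pmf ?T1)"
    unfolding emeasure_bind_pmf
  proof (intro nn_integral_mono_AE AE_pmfI)
    fix po assume po: "po \<in> set_pmf ?T1"
    show "emeasure (measure_pmf (F po)) E \<le> (\<Sum>p\<in>P. indicator (Some ` {p}) po * c p)"
    proof (cases po)
      case None
      then show ?thesis using none by simp
    next
      case (Some p)
      with po try_until_set[of n "pmf_of_set P" prime] fP ne
      have p: "p \<in> P" "prime p" by auto
      have "(\<Sum>p'\<in>P. indicator (Some ` {p'}) po * c p') = (\<Sum>p'\<in>P. (if p = p' then c p' else 0))"
        using Some by (intro sum.cong) (auto simp: indicator_def)
      also have "\<dots> = c p" using p fP by simp
      finally show ?thesis using some[OF p] Some by simp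
    qed
  qed
  also have "\<dots> = (\<Sum>p\<in>P. (\<integral>\<^sup>+po. indicator (Some ` {p}) po * c p \<partial>measure_pmf ?T1))"
    by (rule nn_integral_sum) auto
  also have "\<dots> = (\<Sum>p\<in>P. emeasure (measure_pmf ?T1) (Some ` {p}) * c p)"
    by (intro sum.cong refl, subst nn_integral_multc) auto
  finally show ?thesis .
qed

lemma gen_bound:
  assumes "Pset lam \<noteq> {}" "Aset lam \<noteq> {}"
  shows "emeasure (measure_pmf (gen_params lam eps)) (Eset K) \<le>
    (\<Sum>p\<in>Pset lam. emeasure (measure_pmf (try_until (nat \<lfloor>5/6 * ln (4/eps) * ln lam\<rfloor>) (pmf_of_set (Pset lam)) prime)) (Some ` {p})
       * emeasure (measure_pmf (try_until (nat \<lfloor>12 * ln (4/eps) * ln lam\<rfloor>) (pmf_of_set (Aset lam)) (\<lambda>a. prime (a*p+1)))) (Some ` Gset lam K p))"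
  unfolding gen_params_def Pset_def[symmetric] Aset_def[symmetric]
  apply (rule step1[OF finite_Pset assms(1)])
   apply (simp add: Eset_def)
  subgoal for p
  proof -
    assume p: "p \<in> Pset lam" "prime p"
    have G: "Gset lam K p = {a\<in>Aset lam. prime (a*p+1) \<and> (a*p+1) dvd K}"
      using p by (auto simp: Gset_def)
    show ?thesis unfolding G option.simps by (rule step2[OF finite_Aset assms(2)])
  qed
  done



lemma try_until_measure:
  "measure (measure_pmf (try_until n D P)) (Some ` A) \<le> real n * measure (measure_pmf D) A"
proof -
  have "ennreal (measure (measure_pmf (try_until n D P)) (Some ` A)) \<le> ennreal (real n * measure (measure_pmf D) A)"
    using try_until_emeasure[of n D P A]
    by (simp add: measure_pmf.emeasure_eq_measure ennreal_of_nat_eq_real_of_nat ennreal_mult)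
  then show ?thesis by (simp add: ennreal_le_iff)
qed

lemma gen_bound_real:
  assumes "Pset lam \<noteq> {}" "Aset lam \<noteq> {}"
  shows "measure (measure_pmf (gen_params lam eps)) (Eset K) \<le>
    (\<Sum>p\<in>Pset lam. measure (measure_pmf (try_until (nat \<lfloor>5/6 * ln (4/eps) * ln lam\<rfloor>) (pmf_of_set (Pset lam)) prime)) (Some ` {p})
       * measure (measure_pmf (try_until (nat \<lfloor>12 * ln (4/eps) * ln lam\<rfloor>) (pmf_of_set (Aset lam)) (\<lambda>a. prime (a*p+1)))) (Some ` Gset lam K p))"
proof -
  have "ennreal (measure (measure_pmf (gen_params lam eps)) (Eset K)) \<le>
    ennreal (\<Sum>p\<in>Pset lam. measure (measure_pmf (try_until (nat \<lfloor>5/6 * ln (4/eps) * ln lam\<rfloor>) (pmf_of_set (Pset lam)) prime)) (Some ` {p})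
       * measure (measure_pmf (try_until (nat \<lfloor>12 * ln (4/eps) * ln lam\<rfloor>) (pmf_of_set (Aset lam)) (\<lambda>a. prime (a*p+1)))) (Some ` Gset lam K p))"
    using gen_bound[OF assms, of eps K]
    by (simp add: measure_pmf.emeasure_eq_measure flip: ennreal_mult)
  then show ?thesis by (simp add: ennreal_le_iff sum_nonneg)
qed



lemma two_pow_card_pf:
  assumes "n > 0"
  shows "2 ^ card (prime_factors n) \<le> (n::nat)"
proof -
  have "(2::nat) ^ card (prime_factors n) = (\<Prod>p\<in>prime_factors n. 2)" by simp
  also have "\<dots> \<le> (\<Prod>p\<in>prime_factors n. p ^ multiplicity p n)"
  proof (rule prod_mono)
    fix p assume p: "p \<in> prime_factors n"
    then have "prime p" "multiplicity p n > 0" by (auto simp: prime_factors_multiplicity)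
    have "2 \<le> p" using \<open>prime p\<close> by (rule prime_ge_2_nat)
    then have "p \<le> p ^ multiplicity p n"
      using self_le_power[of p "multiplicity p n"] \<open>multiplicity p n > 0\<close> by auto
    note \<open>2 \<le> p\<close> this
    then show "0 \<le> (2::nat) \<and> 2 \<le> p ^ multiplicity p n" by simp
  qed
  also have "\<dots> = n" using assms by (subst prod_prime_factors) auto
  finally show ?thesis .
qed

lemma card_pf_log:
  assumes "n > 0"
  shows "real (card (prime_factors n)) \<le> log 2 (real n)"
  using le_log2_of_power[OF two_pow_card_pf[OF assms]] by simp

lemma finite_Gset: "finite (Gset lam K p)"
  by (rule finite_subset[OF _ finite_Aset[of lam]]) (auto simp: Gset_def)

lemma count_G:
  assumes K: "K > 0" and lam: "lam \<ge> 1"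
  shows "real (\<Sum>p\<in>Pset lam. card (Gset lam K p)) \<le> log 2 (real K) * log 2 (2 * lam^6)"
proof -
  let ?S = "Sigma (Pset lam) (Gset lam K)"
  let ?Q = "{q \<in> prime_factors K. 1 \<le> real (q-1) \<and> real (q - 1) \<le> 2*lam^6}"
  let ?T = "Sigma ?Q (\<lambda>q. prime_factors (q-1))"
  have finQ: "finite ?Q" by auto
  have finT: "finite ?T" using finQ by auto
  have "(\<Sum>p\<in>Pset lam. card (Gset lam K p)) = card ?S"
    by (simp add: card_SigmaI finite_Pset finite_Gset)
  also have "\<dots> \<le> card ?T"
  proof (rule card_inj_on_le[where f = "\<lambda>(p,a). (a*p+1, p)"])
    show "inj_on (\<lambda>(p,a). (a*p+1, p)) ?S"
    proof (rule inj_onI)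
      fix x y assume x: "x \<in> ?S" and y: "y \<in> ?S" and eq: "(\<lambda>(p,a). (a*p+1, p)) x = (\<lambda>(p,a). (a*p+1, p)) y"
      obtain p a where xp: "x = (p,a)" by force
      obtain p' a' where yp: "y = (p',a')" by force
      have "p \<in> Pset lam" using x xp by auto
      then have "p > 0" using lam unfolding Pset_def by (auto intro!: Nat.gr0I)
      from eq have "a * p + 1 = a' * p' + 1" "p = p'" by (auto simp: xp yp)
      then have "a * p = a' * p" "p = p'" by auto
      then have "a = a'" "p = p'" using \<open>p > 0\<close> by auto
      then show "x = y" using xp yp by simp
    qed
  next
    show "(\<lambda>(p,a). (a*p+1, p)) ` ?S \<subseteq> ?T"
    proof (rule image_subsetI)
      fix x assume "x \<in> ?S"
      then obtain p a where x: "x = (p,a)" and p: "p \<in> Pset lam" and a: "a \<in> Gset lam K p" by auto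
      from a have pr: "prime p" "prime (a*p+1)" "(a*p+1) dvd K" "a \<ge> 1" "real a \<le> lam^5"
        by (auto simp: Gset_def Aset_def)
      from p have p1: "real p < 2 * lam" "lam < real p" by (auto simp: Pset_def)
      have "p \<ge> 1" using pr(1) prime_ge_1_nat by blast
      then have "a * p \<ge> 1" using pr(4) by simp
      have "real (a * p) \<le> lam^5 * (2 * lam)"
        unfolding of_nat_mult using pr(5) p1 lam by (intro mult_mono) auto
      then have "real (a*p) \<le> 2 * lam^6" by (simp add: power_def algebra_simps eval_nat_numeral)
      moreover have "a*p+1 \<in> prime_factors K" using pr K by (auto simp: prime_factors_dvd)
      moreover have "p \<in> prime_factors (a*p+1-1)" using pr \<open>a*p \<ge> 1\<close> by (auto simp: prime_factors_dvd)
      ultimately show "(\<lambda>(p,a). (a*p+1, p)) x \<in> ?T" using \<open>a*p \<ge> 1\<close> x by auto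
    qed
  qed (rule finT)
  finally have 0: "(\<Sum>p\<in>Pset lam. card (Gset lam K p)) \<le> card ?T" .
  have 1: "real (\<Sum>p\<in>Pset lam. card (Gset lam K p)) \<le> real (card ?T)" using 0 by (simp only: of_nat_le_iff)
  have "real (card ?T) = (\<Sum>q\<in>?Q. real (card (prime_factors (q-1))))"
    using finQ by (simp add: card_SigmaI)
  also have "\<dots> \<le> (\<Sum>q\<in>?Q. log 2 (2 * lam^6))"
  proof (rule sum_mono)
    fix q assume q: "q \<in> ?Q"
    then have "q - 1 > 0" by auto
    then have "real (card (prime_factors (q-1))) \<le> log 2 (real (q-1))" by (rule card_pf_log)
    also have "\<dots> \<le> log 2 (2 * lam^6)" using q by (subst log_le_cancel_iff) auto
    finally show "real (card (prime_factors (q-1))) \<le> log 2 (2 * lam^6)" .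
  qed
  also have "\<dots> = real (card ?Q) * log 2 (2 * lam^6)" by simp
  also have "\<dots> \<le> real (card (prime_factors K)) * log 2 (2 * lam^6)"
  proof (rule mult_right_mono)
    show "real (card ?Q) \<le> real (card (prime_factors K))" by (intro of_nat_mono card_mono) auto
    have "1 \<le> 2 * lam ^ 6" using one_le_power[OF lam, of 6] by linarith
    then show "0 \<le> log 2 (2 * lam ^ 6)" by (subst zero_le_log_cancel_iff) auto
  qed
  also have "\<dots> \<le> log 2 (real K) * log 2 (2 * lam^6)"
  proof (rule mult_right_mono)
    show "real (card (prime_factors K)) \<le> log 2 (real K)" using K by (rule card_pf_log)
    have "1 \<le> 2 * lam ^ 6" using one_le_power[OF lam, of 6] by linarith
    then show "0 \<le> log 2 (2 * lam ^ 6)" by (subst zero_le_log_cancel_iff) auto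
  qed
  finally show ?thesis using 1 by linarith
qed



lemma card_Pset:
  assumes lam: "lam \<ge> 6"
  shows "real (card (Pset lam)) \<ge> lam / 4"
proof -
  define n0 where "n0 = nat \<lfloor>lam\<rfloor>"
  have n0: "real n0 \<le> lam" "lam < real n0 + 1" using lam unfolding n0_def by linarith+
  have sub: "(\<lambda>k. 2*k+1) ` {n0 div 2 + 1 ..< n0} \<subseteq> Pset lam"
  proof
    fix x assume "x \<in> (\<lambda>k. 2*k+1) ` {n0 div 2 + 1 ..< n0}"
    then obtain k where k: "x = 2*k+1" "n0 div 2 + 1 \<le> k" "k < n0" by auto
    have "n0 + 2 \<le> x" using k by linarith
    then have "real n0 + 2 \<le> real x" by linarith
    moreover have "x + 1 \<le> 2 * n0" using k by linarith
    then have "real x + 1 \<le> 2 * real n0" by linarith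
    ultimately show "x \<in> Pset lam" using n0 k unfolding Pset_def by auto
  qed
  have inj: "inj_on (\<lambda>k::nat. 2*k+1) {n0 div 2 + 1 ..< n0}" by (auto simp: inj_on_def)
  have "card {n0 div 2 + 1 ..< n0} \<le> card (Pset lam)"
    using card_mono[OF finite_Pset sub] card_image[OF inj] by simp
  moreover have "real (card {n0 div 2 + 1 ..< n0}) \<ge> real n0 / 2 - 1"
  proof -
    have "card {n0 div 2 + 1 ..< n0} = n0 - (n0 div 2 + 1)" by simp
    moreover have "real (n0 div 2) \<le> real n0 / 2" by linarith
    ultimately show ?thesis by linarith
  qed
  ultimately show ?thesis using n0 lam by linarith
qed

lemma card_Aset:
  assumes lam: "lam ^ 5 \<ge> 4"
  shows "real (card (Aset lam)) \<ge> lam ^ 5 / 4"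
proof -
  define m where "m = nat \<lfloor>lam^5/2\<rfloor>"
  have m: "2 * real m \<le> lam^5" "lam^5/2 < real m + 1" using lam unfolding m_def by linarith+
  have sub: "(\<lambda>k. 2*k) ` {1..m} \<subseteq> Aset lam"
  proof
    fix x assume "x \<in> (\<lambda>k. 2*k) ` {1..m}"
    then obtain k where k: "x = 2*k" "1 \<le> k" "k \<le> m" by auto
    have "real x \<le> 2 * real m" using k by simp
    then show "x \<in> Aset lam" using m k unfolding Aset_def by auto
  qed
  have inj: "inj_on (\<lambda>k::nat. 2*k) {1..m}" by (auto simp: inj_on_def)
  have "card {1..m} \<le> card (Aset lam)"
    using card_mono[OF finite_Aset sub] card_image[OF inj] by simp
  then show ?thesis using m lam by simp
qed



lemma ln_pow5_bound:
  fixes lam :: real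
  assumes lam: "lam \<ge> 2^56"
  shows "54 * (ln lam)^5 \<le> lam"
proof -
  have "(1::real) \<le> 2^56" by simp
  then have l1: "lam \<ge> 1" using lam by linarith
  then have lpos: "lam > 0" by linarith
  have l0: "0 \<le> ln lam" using l1 by simp
  have "ln lam = 10 * ln (lam powr (1/10))" using lpos by (simp add: ln_powr)
  also have "\<dots> \<le> 10 * lam powr (1/10)" using ln_less_self[of "lam powr (1/10)"] lpos by simp
  finally have 1: "ln lam \<le> 10 * lam powr (1/10)" .
  have "(ln lam)^5 \<le> (10 * lam powr (1/10))^5" using 1 l0 by (intro power_mono) auto
  also have "\<dots> = 10^5 * (lam powr (1/10))^5" by (simp add: power_mult_distrib)
  also have "(lam powr (1/10))^5 = lam powr (1/2)" using lpos by (simp add: powr_realpow [symmetric] powr_powr)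
  also have "lam powr (1/2) = sqrt lam" using lpos by (simp add: powr_half_sqrt)
  finally have 2: "(ln lam)^5 \<le> 10^5 * sqrt lam" .
  have e: "((2::real)^28)^2 = 2^56" by simp
  have "sqrt (((2::real)^28)^2) \<le> sqrt lam" unfolding real_sqrt_le_iff e using lam .
  then have s: "2^28 \<le> sqrt lam" by simp
  have "54 * (ln lam)^5 \<le> 54 * 10^5 * sqrt lam" using 2 by simp
  also have "\<dots> \<le> sqrt lam * sqrt lam" using s lpos by (intro mult_right_mono) auto
  also have "\<dots> = lam" using lpos by simp
  finally show ?thesis .
qed



lemma nat_floor_le: "0 \<le> x \<Longrightarrow> real (nat \<lfloor>x\<rfloor>) \<le> x"
  by (metis of_int_floor_le of_nat_nat zero_le_floor)

theorem theorem2: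
  fixes K :: nat and mu lam eps :: real
  assumes "K > 0"
    and "0 < mu" and "mu < 1"
    and "lam \<ge> max (2 ^ 56 / mu ^ 2) (root 5 (48 / mu * ln (real K)))"
    and "0 < eps" and "eps < 1" and "lam \<ge> 2 ^ 58 / eps ^ 2"
  shows "measure_pmf.prob (gen_params lam eps)
           {r. \<exists>p q w. r = Some (p, q, w) \<and> q dvd K} \<le> mu"
proof -
  note K = assms(1) and mu = assms(2,3) and eps = assms(5,6)
  have lam1: "lam \<ge> 2 ^ 56 / mu ^ 2" and lam2: "lam \<ge> root 5 (48 / mu * ln (real K))"
    using assms(4) by auto
  have "mu^2 \<le> 1" using mu by (simp add: power_le_one)
  moreover have "mu^2 > 0" using mu by simp
  ultimately have "2^56 / mu^2 \<ge> (2^56::real)" by (simp add: le_divide_eq)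
  then have lam56: "lam \<ge> 2^56" using lam1 by linarith
  have "(2::real)^56 \<ge> 8" by simp
  then have lam8: "lam \<ge> 8" using lam56 by linarith
  then have lpos: "lam > 0" by simp
  define l where "l = ln lam"
  define L where "L = ln (4/eps)"
  have l1: "l \<ge> 1" unfolding l_def using lam8 by (subst ln_ge_iff) (auto intro: order_trans[OF exp_le])
  have lnK0: "ln (real K) \<ge> 0" using K by simp
  have "48 / mu * ln (real K) = (root 5 (48 / mu * ln (real K)))^5"
    using lnK0 mu by (simp add: real_root_pow_pos2)
  also have "\<dots> \<le> lam^5" using lam2 lnK0 mu by (intro power_mono) auto
  finally have "48 / mu * ln (real K) \<le> lam^5" .
  then have lnK: "ln (real K) \<le> mu * lam^5 / 48" using mu by (simp add: field_simps)
  have "eps^2 * lam \<ge> 2^58" using assms(7) eps by (simp add: field_simps)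
  have "16 \<le> (eps * lam)^2"
  proof -
    have "(16::real) \<le> 2^58" by simp
    also have "\<dots> \<le> eps^2 * lam" by fact
    also have "\<dots> = eps^2 * lam * 1" by simp
    also have "\<dots> \<le> eps^2 * lam * lam" using lam8 lpos by (intro mult_left_mono) auto
    finally show ?thesis by (simp add: power2_eq_square algebra_simps)
  qed
  then have "(4::real)^2 \<le> (eps*lam)^2" by simp
  then have "4 \<le> eps * lam" by (rule power2_le_imp_le) (use eps lpos in simp)
  then have "4 / eps \<le> lam" using eps by (simp add: divide_le_eq mult.commute)
  moreover have "4 / eps > 1" using eps by simp
  ultimately have L: "L \<le> l" "L > 0" unfolding L_def l_def using eps by (auto intro: ln_mono)
  define N1 where "N1 = nat \<lfloor>5/6 * ln (4/eps) * ln lam\<rfloor>"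
  define N2 where "N2 = nat \<lfloor>12 * ln (4/eps) * ln lam\<rfloor>"
  have N1: "real N1 \<le> 5/6 * L * l" unfolding N1_def L_def[symmetric] l_def[symmetric]
    using L l1 by (intro nat_floor_le) simp
  have N2: "real N2 \<le> 12 * L * l" unfolding N2_def L_def[symmetric] l_def[symmetric]
    using L l1 by (intro nat_floor_le) simp
  have cP: "real (card (Pset lam)) \<ge> lam / 4" using lam8 by (intro card_Pset) simp
  have "lam^1 \<le> lam^5" by (rule power_increasing) (use lam8 in auto)
  then have l5: "lam^5 \<ge> 4" using lam8 by simp
  then have cA: "real (card (Aset lam)) \<ge> lam^5 / 4" by (rule card_Aset)
  have Pne: "Pset lam \<noteq> {}" using cP lpos by auto
  have Ane: "Aset lam \<noteq> {}" using cA lpos by auto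
  define cp where "cp = real (card (Pset lam))"
  define ca where "ca = real (card (Aset lam))"
  have cp0: "cp > 0" using cP lpos unfolding cp_def by linarith
  have ca0: "ca > 0" using cA l5 unfolding ca_def by linarith
  have "measure_pmf.prob (gen_params lam eps) (Eset K) \<le>
    (\<Sum>p\<in>Pset lam. measure (measure_pmf (try_until N1 (pmf_of_set (Pset lam)) prime)) (Some ` {p})
       * measure (measure_pmf (try_until N2 (pmf_of_set (Aset lam)) (\<lambda>a. prime (a*p+1)))) (Some ` Gset lam K p))"
    unfolding N1_def N2_def by (rule gen_bound_real[OF Pne Ane])
  also have "\<dots> \<le> (\<Sum>p\<in>Pset lam. (real N1 / cp) * (real N2 * real (card (Gset lam K p)) / ca))"
  proof (rule sum_mono)
    fix p assume p: "p \<in> Pset lam"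
    have m1: "measure (measure_pmf (try_until N1 (pmf_of_set (Pset lam)) prime)) (Some ` {p}) \<le> real N1 / cp"
      using try_until_measure[of N1 "pmf_of_set (Pset lam)" prime "{p}"] p Pne finite_Pset
      by (simp add: measure_pmf_of_set cp_def)
    have "Aset lam \<inter> Gset lam K p = Gset lam K p" by (auto simp: Gset_def)
    then have m2: "measure (measure_pmf (try_until N2 (pmf_of_set (Aset lam)) (\<lambda>a. prime (a*p+1)))) (Some ` Gset lam K p)
        \<le> real N2 * real (card (Gset lam K p)) / ca"
      using try_until_measure[of N2 "pmf_of_set (Aset lam)" "\<lambda>a. prime (a*p+1)" "Gset lam K p"] Ane finite_Aset
      by (simp add: measure_pmf_of_set ca_def)
    show "measure (measure_pmf (try_until N1 (pmf_of_set (Pset lam)) prime)) (Some ` {p})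
       * measure (measure_pmf (try_until N2 (pmf_of_set (Aset lam)) (\<lambda>a. prime (a*p+1)))) (Some ` Gset lam K p)
       \<le> (real N1 / cp) * (real N2 * real (card (Gset lam K p)) / ca)"
      using m1 m2 cp0 by (intro mult_mono) auto
  qed
  also have "\<dots> = real N1 * real N2 / (cp * ca) * real (\<Sum>p\<in>Pset lam. card (Gset lam K p))"
    by (simp add: sum_distrib_left mult.assoc)
  also have "\<dots> \<le> (10 * l^4) / (lam^6 / 16) * (mu * lam^5 * l * (5/16))"
  proof -
    have l2: "ln (2::real) \<ge> 2/3" by (rule ln2_ge_two_thirds)
    have c: "real (\<Sum>p\<in>Pset lam. card (Gset lam K p)) \<le> log 2 (real K) * log 2 (2 * lam^6)"
      using K lam8 by (intro count_G) auto
    have "log 2 (real K) = ln (real K) / ln 2" by (simp add: log_def)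
    also have "\<dots> \<le> ln (real K) / (2/3)" using lnK0 l2 by (intro divide_left_mono) auto
    also have "\<dots> \<le> (mu * lam^5 / 48) / (2/3)" using lnK by (intro divide_right_mono) auto
    finally have g1: "log 2 (real K) \<le> mu * lam^5 / 32" by simp
    have g10: "0 \<le> log 2 (real K)" using K by simp
    have g2eq: "log 2 (2 * lam^6) = 1 + 6 * (l / ln 2)"
      using lpos by (simp add: log_def l_def ln_mult ln_realpow add_divide_distrib)
    also have "l / ln 2 \<le> l / (2/3)" using l2 l1 by (intro divide_left_mono) auto
    finally have g2: "log 2 (2 * lam^6) \<le> 10 * l" using l1 by simp
    have "real (\<Sum>p\<in>Pset lam. card (Gset lam K p)) \<le> (mu * lam^5 / 32) * (10 * l)"
    proof -
      have g20: "0 \<le> log 2 (2 * lam^6)" unfolding g2eq using l1 by simp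
      have "log 2 (real K) * log 2 (2 * lam^6) \<le> (mu * lam^5 / 32) * (10 * l)"
        using g1 g2 g10 g20 mu lpos by (intro mult_mono) auto
      then show ?thesis using c by linarith
    qed
    then have S: "real (\<Sum>p\<in>Pset lam. card (Gset lam K p)) \<le> mu * lam^5 * l * (5/16)" by (simp add: algebra_simps)
    have "real N1 * real N2 \<le> (5/6 * L * l) * (12 * L * l)"
      using N1 N2 by (intro mult_mono) auto
    also have "\<dots> = 10 * (L*L) * (l*l)" by simp
    also have "\<dots> \<le> 10 * (l*l) * (l*l)" using L l1 by (intro mult_right_mono mult_left_mono mult_mono) auto
    finally have NN: "real N1 * real N2 \<le> 10 * l^4" by (simp add: power_def eval_nat_numeral mult.assoc)
    have "lam^6 / 16 = (lam/4) * (lam^5/4)" by (simp add: power_def eval_nat_numeral)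
    also have "\<dots> \<le> cp * ca" using cP cA lpos unfolding cp_def ca_def by (intro mult_mono) auto
    finally have cc: "lam^6 / 16 \<le> cp * ca" .
    have "real N1 * real N2 / (cp * ca) \<le> (10 * l^4) / (lam^6 / 16)"
      using NN cc lpos l1 by (intro frac_le) auto
    then show ?thesis using S mu by (intro mult_mono) (auto simp: sum_nonneg)
  qed
  also have "\<dots> = 50 * mu * l^5 / lam" using lpos by (simp add: field_simps power_def eval_nat_numeral)
  also have "\<dots> \<le> mu"
  proof -
    have "54 * l^5 \<le> lam" unfolding l_def by (rule ln_pow5_bound[OF lam56])
    moreover have "0 \<le> l^5" using l1 by simp
    ultimately have "50 * l^5 \<le> lam" by linarith
    then have "mu * (50 * l^5) \<le> mu * lam" using mu by (intro mult_left_mono) auto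
    then show ?thesis using lpos by (simp add: divide_le_eq mult.commute mult.left_commute)
  qed
  finally show ?thesis unfolding Eset_def .
qed

end
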